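(* Let $d\ge2$, let $U_0$ be a non-empty bounded Borel subset of $\mathbb{R}^d$, $U_1=\mathbb{R}^d\setminus U_0$. For all $x,y\in\mathbb{R}^d$ and $\ell\in\mathbb{Z}$, $$|\widehat\sigma_\ell(x+y)-\widehat\sigma_\ell(x)|\le 2^\ell|y|_1,\qquad |\widetilde\sigma_\ell(x+y)-\widetilde\sigma_\ell(x)|\le 2^{\ell-2}|y|_1.$$ Moreover, for integers $\ell'>\ell$ and $x\in\mathbb{R}^d$, $$\Big|\widehat\sigma_\ell(x)-\frac{1}{|B(x,2^{-\ell})|}\int_{B(x,2^{-\ell})}\widehat\sigma_{\ell'}(y)\,dy\Big|\le c_0\,2^{\ell-\ell'},\qquad c_0=d\,2^{d-1}.$$
   Context: $|\cdot|_1$ is the $\ell^1$-norm; $B(x,r)$ the closed sup-norm ball; $|\cdot|$ Lebesgue measure. $\widehat\sigma_\ell(x)=|B(x,2^{-\ell})\cap U_1|/|B(x,2^{-\ell})|$ and $\widetilde\sigma_\ell(x)=|B(x,4\cdot2^{-\ell})\cap U_1|/|B(x,4\cdot2^{-\ell})|$. *)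

theory Defs
  imports "HOL-Analysis.Analysis"
begin

text \<open>Closed sup-norm ball in R^d (vectors indexed by a finite type 'n, d = CARD('n)).\<close>
definition supball :: "real ^ 'n \<Rightarrow> real \<Rightarrow> (real ^ 'n) set" where
  "supball x r = {y. \<forall>i. \<bar>y $ i - x $ i\<bar> \<le> r}"

definition l1norm :: "real ^ 'n \<Rightarrow> real" where
  "l1norm y = (\<Sum>i\<in>UNIV. \<bar>y $ i\<bar>)"

definition density_U1 :: "(real ^ 'n) set \<Rightarrow> real \<Rightarrow> real ^ 'n \<Rightarrow> real" where
  "density_U1 U0 r x =
     measure lebesgue (supball x r \<inter> (UNIV - U0)) / measure lebesgue (supball x r)"

definition sigma_hat :: "(real ^ 'n) set \<Rightarrow> int \<Rightarrow> real ^ 'n \<Rightarrow> real" where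
  "sigma_hat U0 l x = density_U1 U0 (2 powr (- real_of_int l)) x"

definition sigma_tilde :: "(real ^ 'n) set \<Rightarrow> int \<Rightarrow> real ^ 'n \<Rightarrow> real" where
  "sigma_tilde U0 l x = density_U1 U0 (4 * 2 powr (- real_of_int l)) x"

end

theory Submission
  imports Defs
begin

lemma supball_cbox: "supball x r = cbox (\<chi> i. x$i - r) (\<chi> i. x$i + r)"
  unfolding supball_def by (auto simp: mem_box_cart abs_le_iff; smt (verit))

lemma supball_borel[measurable]: "supball x r \<in> sets borel"
  by (simp add: supball_cbox)

lemma measure_supball: "r \<ge> 0 \<Longrightarrow> measure lborel (supball x r) = (2*r) ^ CARD('n)"
  for x :: "real^'n"
proof -
  assume r: "r \<ge> 0"
  have ne: "cbox (\<chi> i. x$i - r) (\<chi> i. x$i + r) \<noteq> {}"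
    using r by (auto simp: interval_eq_empty_cart)
  show ?thesis unfolding supball_cbox using content_cbox_cart[OF ne]
    by simp
qed

lemma supball_mono: "r1 \<le> r2 \<Longrightarrow> supball x r1 \<subseteq> supball x r2"
  unfolding supball_def using order_trans by blast

lemma fmeas_supball: "supball x r \<in> fmeasurable lborel"
  using emeasure_lborel_cbox_finite by (simp add: supball_cbox fmeasurable_def top.not_eq_extremum)

lemma density_eq: "U0 \<in> sets borel \<Longrightarrow> density_U1 U0 r x =
   measure lborel (supball x r \<inter> (UNIV - U0)) / measure lborel (supball x r)"
  unfolding density_U1_def
  by (subst measure_completion, simp, subst measure_completion, auto)


lemma fmeas_cbox: "cbox a b \<in> fmeasurable lborel"
  using emeasure_lborel_cbox_finite by (simp add: fmeasurable_def top.not_eq_extremum)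

lemma diff_cover:
  fixes x y :: "real^'n" and r :: real
  defines "a \<equiv> \<lambda>i. (\<chi> j. if j = i then (if y$i \<ge> 0 then x$i + r else x$i + y$i - r) else x$j + y$j - r)"
      and "b \<equiv> \<lambda>i. (\<chi> j. if j = i then (if y$i \<ge> 0 then x$i + r + y$i else x$i - r) else x$j + y$j + r)"
  shows "supball (x+y) r - supball x r \<subseteq> (\<Union>i. cbox (a i) (b i))"
proof
  fix z assume z: "z \<in> supball (x+y) r - supball x r"
  then obtain i where i: "\<bar>z$i - x$i\<bar> > r" unfolding supball_def by (auto simp: not_le)
  have zz: "\<And>j. \<bar>z$j - x$j - y$j\<bar> \<le> r" using z unfolding supball_def by (simp add: diff_diff_eq)
  have "z \<in> cbox (a i) (b i)"
    unfolding mem_box_cart a_def b_def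
  proof
    fix j show "(\<chi> j. if j = i then (if y$i \<ge> 0 then x$i + r else x$i + y$i - r) else x$j + y$j - r) $ j \<le> z $ j \<and>
         z $ j \<le> (\<chi> j. if j = i then (if y$i \<ge> 0 then x$i + r + y$i else x$i - r) else x$j + y$j + r) $ j"
    proof (cases "j = i")
      case True
      have h1: "z$i - x$i - y$i \<le> r" "-(z$i - x$i - y$i) \<le> r" using zz[of i] by linarith+
      have h2: "z$i - x$i > r \<or> z$i - x$i < -r" using i by linarith
      show ?thesis
      proof (cases "y$i \<ge> 0")
        case True
        then have "x$i + r \<le> z$i \<and> z$i \<le> x$i + r + y$i" using h1 h2 by linarith
        then show ?thesis using True \<open>j = i\<close> by simp
      next
        case False
        then have "x$i + y$i - r \<le> z$i \<and> z$i \<le> x$i - r" using h1 h2 by linarith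
        then show ?thesis using False \<open>j = i\<close> by simp
      qed
    next
      case False
      have "x$j + y$j - r \<le> z$j \<and> z$j \<le> x$j + y$j + r" using zz[of j] by linarith
      then show ?thesis using False by simp
    qed
  qed
  then show "z \<in> (\<Union>i. cbox (a i) (b i))" by blast
qed

lemma measure_diff_ball:
  fixes x y :: "real^'n"
  assumes r: "r \<ge> 0"
  shows "measure lborel (supball (x+y) r - supball x r) \<le> l1norm y * (2*r)^(CARD('n) - 1)"
proof -
  define a where "a \<equiv> \<lambda>i. (\<chi> j. if j = i then (if y$i \<ge> 0 then x$i + r else x$i + y$i - r) else x$j + y$j - r)"
  define b where "b \<equiv> \<lambda>i. (\<chi> j. if j = i then (if y$i \<ge> 0 then x$i + r + y$i else x$i - r) else x$j + y$j + r)"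
  have cov: "supball (x+y) r - supball x r \<subseteq> (\<Union>i. cbox (a i) (b i))"
    unfolding a_def b_def by (rule diff_cover)
  have m: "measure lborel (cbox (a i) (b i)) = \<bar>y$i\<bar> * (2*r)^(CARD('n) - 1)" for i
  proof -
    have ne: "cbox (a i) (b i) \<noteq> {}"
      using r by (auto simp: interval_eq_empty_cart a_def b_def not_less)
    have "measure lborel (cbox (a i) (b i)) = (\<Prod>j\<in>UNIV. b i $ j - a i $ j)"
      using content_cbox_cart[OF ne] by simp
    also have "\<dots> = (b i $ i - a i $ i) * (\<Prod>j\<in>UNIV - {i}. b i $ j - a i $ j)"
      by (simp add: prod.remove)
    also have "(\<Prod>j\<in>UNIV - {i}. b i $ j - a i $ j) = (\<Prod>j\<in>UNIV - {i}. 2*r)"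
      by (rule prod.cong) (auto simp: a_def b_def)
    also have "\<dots> = (2*r)^(CARD('n) - 1)"
      by (simp add: card_Diff_singleton)
    also have "b i $ i - a i $ i = \<bar>y$i\<bar>" by (simp add: a_def b_def)
    finally show ?thesis .
  qed
  have "measure lborel (supball (x+y) r - supball x r) \<le> measure lborel (\<Union>i. cbox (a i) (b i))"
  proof (rule measure_mono_fmeasurable[OF cov])
    show "supball (x + y) r - supball x r \<in> sets lborel" by simp
    show "(\<Union>i. cbox (a i) (b i)) \<in> fmeasurable lborel"
      by (intro fmeasurable.finite_UN) (auto intro: fmeas_cbox)
  qed
  also have "\<dots> \<le> (\<Sum>i\<in>UNIV. measure lborel (cbox (a i) (b i)))"
    by (rule measure_UNION_le) auto
  also have "\<dots> = l1norm y * (2*r)^(CARD('n) - 1)"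
    by (simp add: m l1norm_def sum_distrib_right)
  finally show ?thesis .
qed

lemma lip_meas:
  fixes x y :: "real^'n"
  assumes r: "r \<ge> 0" and A: "A \<in> sets borel"
  shows "measure lborel (supball (x+y) r \<inter> A) - measure lborel (supball x r \<inter> A) \<le> l1norm y * (2*r)^(CARD('n) - 1)"
proof -
  have sub: "supball (x+y) r \<inter> A \<subseteq> (supball x r \<inter> A) \<union> (supball (x+y) r - supball x r)" by blast
  have f1: "supball x r \<inter> A \<in> fmeasurable lborel"
    by (rule fmeasurableI2[OF fmeas_supball]) (use A in auto)
  have f2: "supball (x+y) r - supball x r \<in> fmeasurable lborel"
    by (rule fmeasurableI2[OF fmeas_supball]) auto
  have "measure lborel (supball (x+y) r \<inter> A) \<le> measure lborel ((supball x r \<inter> A) \<union> (supball (x+y) r - supball x r))"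
    by (rule measure_mono_fmeasurable[OF sub]) (use A f1 f2 in auto)
  also have "\<dots> \<le> measure lborel (supball x r \<inter> A) + measure lborel (supball (x+y) r - supball x r)"
    by (rule measure_Un_le) (use A in auto)
  finally show ?thesis using measure_diff_ball[OF r, of x y] by linarith
qed

lemma l1norm_uminus: "l1norm (- y) = l1norm y"
  by (simp add: l1norm_def)

lemma lip_dens:
  fixes x y :: "real^'n"
  assumes r: "r > 0" and A: "A \<in> sets borel"
  shows "\<bar>measure lborel (supball (x+y) r \<inter> A) / measure lborel (supball (x+y) r)
          - measure lborel (supball x r \<inter> A) / measure lborel (supball x r)\<bar> \<le> l1norm y / (2*r)"
proof -
  let ?d = "CARD('n)"
  have 1: "measure lborel (supball (x+y) r \<inter> A) - measure lborel (supball x r \<inter> A) \<le> l1norm y * (2*r)^(?d - 1)"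
    using lip_meas[OF less_imp_le[OF r] A] .
  have 2: "measure lborel (supball x r \<inter> A) - measure lborel (supball (x+y) r \<inter> A) \<le> l1norm y * (2*r)^(?d - 1)"
    using lip_meas[OF less_imp_le[OF r] A, of "x+y" "-y"] by (simp add: l1norm_uminus)
  define K where "K = (2*r)^(?d - 1)"
  have Kpos: "K > 0" using r by (simp add: K_def)
  have dd: "?d = Suc (?d - 1)" by simp
  have pd: "(2*r)^?d = (2*r) * K"
    unfolding K_def by (subst dd) (simp only: power_Suc)
  define D where "D = \<bar>measure lborel (supball (x+y) r \<inter> A) - measure lborel (supball x r \<inter> A)\<bar>"
  have DK: "D \<le> l1norm y * K"
    using 1 2 unfolding D_def K_def by linarith
  have "D / (2*r)^?d = D / (2*r*K)" by (simp only: pd)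
  also have "\<dots> \<le> (l1norm y * K) / (2*r*K)"
    by (rule divide_right_mono[OF DK]) (use r Kpos in simp)
  also have "\<dots> = l1norm y / (2*r)" using Kpos by simp
  finally have fin: "D / (2*r)^?d \<le> l1norm y / (2*r)" .
  have "measure lborel (supball (x+y) r \<inter> A) / measure lborel (supball (x+y) r)
          - measure lborel (supball x r \<inter> A) / measure lborel (supball x r)
        = (measure lborel (supball (x+y) r \<inter> A) - measure lborel (supball x r \<inter> A)) / (2*r)^?d"
    using r by (simp add: measure_supball diff_divide_distrib)
  then show ?thesis using fin r unfolding D_def by (simp add: abs_divide)
qed


lemma S_meas:
  fixes x :: "real^'n"
  assumes A[measurable]: "A \<in> sets borel"
  shows "{p::(real^'n) \<times> (real^'n). fst p \<in> supball x r \<and> snd p \<in> A \<and> snd p \<in> supball (fst p) s} \<in> sets (lborel \<Otimes>\<^sub>M lborel)"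
    and "{p::(real^'n) \<times> (real^'n). snd p \<in> A \<and> snd p \<in> supball (fst p) s} \<in> sets (lborel \<Otimes>\<^sub>M lborel)"
proof -
  have cl: "closed {p::(real^'n) \<times> (real^'n). \<forall>i. \<bar>snd p $ i - fst p $ i\<bar> \<le> s}"
  proof -
    have "{p::(real^'n) \<times> (real^'n). \<forall>i. \<bar>snd p $ i - fst p $ i\<bar> \<le> s} = (\<Inter>i. {p. \<bar>snd p $ i - fst p $ i\<bar> \<le> s})"
      by auto
    also have "closed \<dots>"
      by (intro closed_INT ballI closed_Collect_le continuous_intros)
    finally show ?thesis .
  qed
  have C: "{p::(real^'n) \<times> (real^'n). \<forall>i. \<bar>snd p $ i - fst p $ i\<bar> \<le> s} \<in> sets (lborel \<Otimes>\<^sub>M lborel)"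
    using borel_closed[OF cl] by (simp only: lborel_prod sets_lborel)
  have e1: "{p::(real^'n) \<times> (real^'n). fst p \<in> supball x r \<and> snd p \<in> A \<and> snd p \<in> supball (fst p) s}
     = (supball x r \<times> A) \<inter> {p::(real^'n) \<times> (real^'n). \<forall>i. \<bar>snd p $ i - fst p $ i\<bar> \<le> s}"
    unfolding supball_def by auto
  have e2: "{p::(real^'n) \<times> (real^'n). snd p \<in> A \<and> snd p \<in> supball (fst p) s}
     = (UNIV \<times> A) \<inter> {p::(real^'n) \<times> (real^'n). \<forall>i. \<bar>snd p $ i - fst p $ i\<bar> \<le> s}"
    unfolding supball_def by auto
  show "{p::(real^'n) \<times> (real^'n). fst p \<in> supball x r \<and> snd p \<in> A \<and> snd p \<in> supball (fst p) s} \<in> sets (lborel \<Otimes>\<^sub>M lborel)"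
    unfolding e1 by (intro sets.Int pair_measureI C) simp_all
  show "{p::(real^'n) \<times> (real^'n). snd p \<in> A \<and> snd p \<in> supball (fst p) s} \<in> sets (lborel \<Otimes>\<^sub>M lborel)"
    unfolding e2 by (intro sets.Int pair_measureI C) simp_all
qed


lemma supball_sym: "z \<in> supball y s \<longleftrightarrow> y \<in> supball z s"
  unfolding supball_def by (auto simp: abs_minus_commute)

lemma emeasure_fin: "X \<subseteq> supball x r \<Longrightarrow> X \<in> sets borel \<Longrightarrow> emeasure lborel X = ennreal (measure lborel X)"
proof (rule emeasure_eq_ennreal_measure)
  assume "X \<subseteq> supball x r" "X \<in> sets borel"
  then have "emeasure lborel X \<le> emeasure lborel (supball x r)"
    by (intro emeasure_mono) simp_all
  moreover have "emeasure lborel (supball x r) < top"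
    using fmeas_supball[of x r] by (simp add: fmeasurable_def)
  ultimately show "emeasure lborel X \<noteq> top" by (simp add: top.not_eq_extremum)
qed

lemma fubini_bound:
  fixes x :: "real^'n"
  assumes A: "A \<in> sets borel" and s: "0 < s" "s \<le> r"
  shows "\<exists>e. ennreal e = emeasure (lborel \<Otimes>\<^sub>M lborel) {p::(real^'n) \<times> (real^'n). fst p \<in> supball x r \<and> snd p \<in> A \<and> snd p \<in> supball (fst p) s}
    \<and> ((2::real) * s) ^ CARD('n) * measure lborel (supball x (r - s) \<inter> A) \<le> e \<and> e \<le> ((2::real) * s) ^ CARD('n) * measure lborel (supball x (r + s) \<inter> A)"
proof -
  define Vs where "Vs = ((2::real) * s) ^ CARD('n)"
  define S where "S = {p::(real^'n) \<times> (real^'n). fst p \<in> supball x r \<and> snd p \<in> A \<and> snd p \<in> supball (fst p) s}"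
  have S: "S \<in> sets (lborel \<Otimes>\<^sub>M lborel)" unfolding S_def using S_meas[OF A] by blast
  have E: "emeasure (lborel \<Otimes>\<^sub>M lborel) S = (\<integral>\<^sup>+z. emeasure lborel ((\<lambda>y. (y, z)) -` S) \<partial>lborel)"
    by (rule lborel_pair.emeasure_pair_measure_alt2[OF S])
  have sl: "(\<lambda>y. (y, z)) -` S = (if z \<in> A then supball x r \<inter> supball z s else {})" for z
    unfolding S_def using supball_sym by auto
  have Vs: "measure lborel (supball z s) = Vs" for z :: "real^'n"
    using s by (simp add: measure_supball Vs_def)
  have lo: "ennreal Vs * indicator (supball x (r - s) \<inter> A) z \<le> emeasure lborel ((\<lambda>y. (y, z)) -` S)" for z
  proof (cases "z \<in> supball x (r - s) \<inter> A")
    case True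
    have "supball z s \<subseteq> supball x r"
    proof
      fix y assume y: "y \<in> supball z s"
      show "y \<in> supball x r" unfolding supball_def
      proof (intro CollectI allI)
        fix i
        have a: "\<bar>y$i - z$i\<bar> \<le> s" using y by (simp add: supball_def)
        have b: "\<bar>z$i - x$i\<bar> \<le> r - s" using True by (simp add: supball_def)
        show "\<bar>y$i - x$i\<bar> \<le> r" using a b by (smt (verit))
      qed
    qed
    then have "supball x r \<inter> supball z s = supball z s" by blast
    then show ?thesis using True by (simp add: sl emeasure_fin[OF order_refl] Vs)
  qed simp
  have hi: "emeasure lborel ((\<lambda>y. (y, z)) -` S) \<le> ennreal Vs * indicator (supball x (r + s) \<inter> A) z" for z
  proof (cases "z \<in> supball x (r + s) \<inter> A")
    case True
    have "emeasure lborel ((\<lambda>y. (y, z)) -` S) \<le> emeasure lborel (supball z s)"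
      by (rule emeasure_mono) (auto simp: sl)
    then show ?thesis using True by (simp add: emeasure_fin[OF order_refl] Vs)
  next
    case False
    have "supball x r \<inter> supball z s = {}" if "z \<in> A"
    proof -
      have "z \<notin> supball x (r + s)" using False that by blast
      then obtain i where i: "\<bar>z$i - x$i\<bar> > r + s" unfolding supball_def by (auto simp: not_le)
      show ?thesis
      proof (rule ccontr)
        assume "supball x r \<inter> supball z s \<noteq> {}"
        then obtain y where y: "y \<in> supball x r" "y \<in> supball z s" by blast
        have a: "\<bar>y$i - z$i\<bar> \<le> s" using y by (simp add: supball_def)
        have b: "\<bar>y$i - x$i\<bar> \<le> r" using y by (simp add: supball_def)
        show False using a b i by (smt (verit))
      qed
    qed
    then show ?thesis by (auto simp: sl)
  qed
  have "(\<integral>\<^sup>+z. ennreal Vs * indicator (supball x (r - s) \<inter> A) z \<partial>lborel) \<le> emeasure (lborel \<Otimes>\<^sub>M lborel) S"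
    unfolding E by (rule nn_integral_mono) (rule lo)
  then have L: "ennreal (Vs * measure lborel (supball x (r - s) \<inter> A)) \<le> emeasure (lborel \<Otimes>\<^sub>M lborel) S"
    using A s by (simp add: nn_integral_cmult_indicator emeasure_fin[of _ x "r-s"] Vs_def ennreal_mult)
  have "emeasure (lborel \<Otimes>\<^sub>M lborel) S \<le> (\<integral>\<^sup>+z. ennreal Vs * indicator (supball x (r + s) \<inter> A) z \<partial>lborel)"
    unfolding E by (rule nn_integral_mono) (rule hi)
  then have H: "emeasure (lborel \<Otimes>\<^sub>M lborel) S \<le> ennreal (Vs * measure lborel (supball x (r + s) \<inter> A))"
    using A s by (simp add: nn_integral_cmult_indicator emeasure_fin[of _ x "r+s"] Vs_def ennreal_mult)
  obtain e where e: "emeasure (lborel \<Otimes>\<^sub>M lborel) S = ennreal e" "0 \<le> e"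
    using H by (cases "emeasure (lborel \<Otimes>\<^sub>M lborel) S" rule: ennreal_cases) (auto simp: top_unique)
  have "Vs * measure lborel (supball x (r - s) \<inter> A) \<le> e"
    using L e by (simp add: ennreal_le_iff)
  moreover have "e \<le> Vs * measure lborel (supball x (r + s) \<inter> A)"
    proof -
    have nn: "0 \<le> Vs * measure lborel (supball x (r + s) \<inter> A)" using s by (simp add: Vs_def)
    show ?thesis using H e nn by (auto simp: ennreal_le_iff2)
  qed
  ultimately show ?thesis using e unfolding S_def Vs_def by auto
qed


lemma avg_integral:
  fixes x :: "real^'n"
  assumes A: "A \<in> sets borel" and s: "0 < s" "s \<le> r"
  shows "\<exists>R. ((\<lambda>y. measure lborel (supball y s \<inter> A) / measure lborel (supball y s)) has_integral R) (supball x r)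
     \<and> measure lborel (supball x (r - s) \<inter> A) \<le> R \<and> R \<le> measure lborel (supball x (r + s) \<inter> A)"
proof -
  define Vs where "Vs = ((2::real) * s) ^ CARD('n)"
  have Vpos: "Vs > 0" using s by (simp add: Vs_def)
  define S where "S = {p::(real^'n) \<times> (real^'n). fst p \<in> supball x r \<and> snd p \<in> A \<and> snd p \<in> supball (fst p) s}"
  define S' where "S' = {p::(real^'n) \<times> (real^'n). snd p \<in> A \<and> snd p \<in> supball (fst p) s}"
  have S: "S \<in> sets (lborel \<Otimes>\<^sub>M lborel)" unfolding S_def using S_meas[OF A] by blast
  have S': "S' \<in> sets (lborel \<Otimes>\<^sub>M lborel)" unfolding S'_def using S_meas[OF A] by blast
  obtain e where e: "ennreal e = emeasure (lborel \<Otimes>\<^sub>M lborel) S"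
    and el: "Vs * measure lborel (supball x (r - s) \<inter> A) \<le> e"
    and eh: "e \<le> Vs * measure lborel (supball x (r + s) \<inter> A)"
    using fubini_bound[OF A s, of x] unfolding S_def Vs_def by blast
  have E: "emeasure (lborel \<Otimes>\<^sub>M lborel) S = (\<integral>\<^sup>+y. emeasure lborel (Pair y -` S) \<partial>lborel)"
    by (rule lborel.emeasure_pair_measure_alt[OF S])
  have slS: "Pair y -` S = (if y \<in> supball x r then supball y s \<inter> A else {})" for y
    unfolding S_def by auto
  have slS': "Pair y -` S' = supball y s \<inter> A" for y
    unfolding S'_def by auto
  define f where "f y = indicator (supball x r) y * (measure lborel (supball y s \<inter> A) / Vs)" for y
  have f_alt: "f = (\<lambda>y. indicator (supball x r) y * (enn2real (emeasure lborel (Pair y -` S')) / Vs))"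
    unfolding f_def slS' measure_def by simp
  have [measurable]: "(\<lambda>y. emeasure lborel (Pair y -` S')) \<in> borel_measurable lborel"
    by (rule lborel.measurable_emeasure_Pair[OF S'])
  have fm: "f \<in> borel_measurable lborel"
    unfolding f_alt by measurable
  have fnn: "0 \<le> f y" for y unfolding f_def using Vpos by simp
  have pw: "ennreal (f y) = emeasure lborel (Pair y -` S) * ennreal (1 / Vs)" for y
  proof (cases "y \<in> supball x r")
    case True
    have "ennreal (f y) = ennreal (measure lborel (supball y s \<inter> A) * (1 / Vs))"
      using True by (simp add: f_def)
    also have "\<dots> = ennreal (measure lborel (supball y s \<inter> A)) * ennreal (1 / Vs)"
      using Vpos by (intro ennreal_mult) auto
    also have "ennreal (measure lborel (supball y s \<inter> A)) = emeasure lborel (supball y s \<inter> A)"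
      using A by (intro emeasure_fin[symmetric, of _ y s]) auto
    finally show ?thesis using True by (simp add: slS)
  qed (simp add: f_def slS)
  have e0: "0 \<le> e / Vs"
    using el Vpos by (meson divide_nonneg_pos measure_nonneg mult_nonneg_nonneg order_trans less_imp_le)
  have ee0: "0 \<le> e" using e0 Vpos by (simp add: divide_nonneg_pos zero_le_divide_iff)
  have "(\<integral>\<^sup>+y. ennreal (f y) \<partial>lborel) = (\<integral>\<^sup>+y. emeasure lborel (Pair y -` S) * ennreal (1 / Vs) \<partial>lborel)"
    by (simp add: pw)
  also have "\<dots> = (\<integral>\<^sup>+y. emeasure lborel (Pair y -` S) \<partial>lborel) * ennreal (1 / Vs)"
    by (rule nn_integral_multc) (rule lborel.measurable_emeasure_Pair[OF S])
  also have "\<dots> = ennreal (e / Vs)"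
  proof -
    have "ennreal e * ennreal (1 / Vs) = ennreal (e * (1 / Vs))"
      using ee0 Vpos by (intro ennreal_mult[symmetric]) auto
    then show ?thesis by (simp add: E[symmetric] e[symmetric])
  qed
  finally have I: "(\<integral>\<^sup>+y. ennreal (f y) \<partial>lborel) = ennreal (e / Vs)" .
  have "(f has_integral (e / Vs)) UNIV"
    by (rule nn_integral_has_integral) (use fm fnn I e0 in auto)
  moreover have "f = (\<lambda>y. if y \<in> supball x r then measure lborel (supball y s \<inter> A) / measure lborel (supball y s) else 0)"
    using s by (auto simp: f_def fun_eq_iff measure_supball Vs_def)
  ultimately have "((\<lambda>y. measure lborel (supball y s \<inter> A) / measure lborel (supball y s)) has_integral (e / Vs)) (supball x r)"
    by (simp add: has_integral_restrict_UNIV)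
  moreover have "measure lborel (supball x (r - s) \<inter> A) \<le> e / Vs"
    using el Vpos by (simp add: field_simps)
  moreover have "e / Vs \<le> measure lborel (supball x (r + s) \<inter> A)"
    using eh Vpos by (simp add: field_simps)
  ultimately show ?thesis by blast
qed


lemma bern1: "0 \<le> (t::real) \<Longrightarrow> t \<le> 1 \<Longrightarrow> 1 - (1 - t) ^ n \<le> real n * t"
  using Bernoulli_inequality[of "- t" n] by simp

lemma bern2_aux: "0 \<le> (t::real) \<Longrightarrow> t \<le> 1 \<Longrightarrow> 2 * (1 + t) ^ n - 2 \<le> real n * 2 ^ n * t"
proof (induction n)
  case 0 then show ?case by simp
next
  case (Suc n)
  have IH: "2 * (1 + t) ^ n - 2 \<le> real n * 2 ^ n * t" using Suc by simp
  have "2 * (1 + t) ^ Suc n - 2 = (1 + t) * (2 * (1 + t) ^ n - 2) + 2 * t" by (simp add: algebra_simps)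
  also have "\<dots> \<le> 2 * (real n * 2 ^ n * t) + 2 * t"
  proof -
    have a: "(1 + t) * (2 * (1 + t) ^ n - 2) \<le> (1 + t) * (real n * 2 ^ n * t)"
      using IH Suc.prems by (intro mult_left_mono) auto
    have b: "(1 + t) * (real n * 2 ^ n * t) \<le> 2 * (real n * 2 ^ n * t)"
      using Suc.prems by (intro mult_right_mono) auto
    show ?thesis using a b by linarith
  qed
  also have "\<dots> \<le> real (Suc n) * 2 ^ Suc n * t"
  proof -
    have "(1::real) \<le> 2 ^ n" by simp
    then have "2 * t \<le> 2 ^ Suc n * t" using Suc.prems by (simp add: mult_right_mono)
    then show ?thesis by (simp add: algebra_simps)
  qed
  finally show ?case .
qed

lemma bern2: "0 \<le> (t::real) \<Longrightarrow> t \<le> 1 \<Longrightarrow> (1 + t) ^ n - 1 \<le> real n * 2 ^ (n - 1) * t"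
proof (cases n)
  case 0 then show ?thesis by simp
next
  case (Suc m)
  assume "0 \<le> t" "t \<le> 1"
  from bern2_aux[OF this, of n] show ?thesis
    unfolding Suc by (simp add: algebra_simps)
qed

lemma meas_diff_le:
  fixes x :: "real^'n"
  assumes A: "A \<in> sets borel" and r: "0 \<le> r1" "r1 \<le> r2"
  shows "measure lborel (supball x r2 \<inter> A) - measure lborel (supball x r1 \<inter> A)
    \<le> measure lborel (supball x r2) - measure lborel (supball x r1)"
proof -
  have sub: "supball x r2 \<inter> A \<subseteq> (supball x r1 \<inter> A) \<union> (supball x r2 - supball x r1)" by blast
  have f1: "supball x r1 \<inter> A \<in> fmeasurable lborel"
    by (rule fmeasurableI2[OF fmeas_supball]) (use A in auto)
  have f2: "supball x r2 - supball x r1 \<in> fmeasurable lborel"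
    by (rule fmeasurableI2[OF fmeas_supball]) auto
  have "measure lborel (supball x r2 \<inter> A) \<le> measure lborel ((supball x r1 \<inter> A) \<union> (supball x r2 - supball x r1))"
    by (rule measure_mono_fmeasurable[OF sub]) (use A f1 f2 in auto)
  also have "\<dots> \<le> measure lborel (supball x r1 \<inter> A) + measure lborel (supball x r2 - supball x r1)"
    by (rule measure_Un_le) (use A in auto)
  also have "measure lborel (supball x r2 - supball x r1) = measure lborel (supball x r2) - measure lborel (supball x r1)"
    by (rule measure_Diff) (use fmeas_supball[of x r2] supball_mono[OF r(2)] in \<open>auto simp: fmeasurable_def\<close>)
  finally show ?thesis by linarith
qed


theorem lemma1p1:
  fixes U0 :: "(real ^ 'n) set"
  assumes "CARD('n) \<ge> 2"
    and "U0 \<in> sets borel" and "U0 \<noteq> {}" and "bounded U0"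
  shows "(\<forall>x y :: real ^ 'n. \<forall>l :: int.
            \<bar>sigma_hat U0 l (x + y) - sigma_hat U0 l x\<bar> \<le> 2 powr (real_of_int l) * l1norm y
          \<and> \<bar>sigma_tilde U0 l (x + y) - sigma_tilde U0 l x\<bar> \<le> 2 powr (real_of_int l - 2) * l1norm y)
       \<and> (\<forall>l l' :: int. \<forall>x :: real ^ 'n. l' > l \<longrightarrow>
            \<bar>sigma_hat U0 l x
              - (1 / measure lebesgue (supball x (2 powr (- real_of_int l))))
                * integral (supball x (2 powr (- real_of_int l))) (sigma_hat U0 l')\<bar>
            \<le> real CARD('n) * 2 ^ (CARD('n) - 1) * 2 powr (real_of_int (l - l')))"
proof -
  define A where "A = UNIV - U0"
  have A: "A \<in> sets borel" using assms(2) unfolding A_def by auto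
  have hat: "sigma_hat U0 l x = measure lborel (supball x (2 powr (- real_of_int l)) \<inter> A) / measure lborel (supball x (2 powr (- real_of_int l)))" for l x
    by (simp add: sigma_hat_def density_eq[OF assms(2)] A_def)
  have tilde: "sigma_tilde U0 l x = measure lborel (supball x (4 * 2 powr (- real_of_int l)) \<inter> A) / measure lborel (supball x (4 * 2 powr (- real_of_int l)))" for l x
    by (simp add: sigma_tilde_def density_eq[OF assms(2)] A_def)
  have l1nn: "0 \<le> l1norm y" for y :: "real^'n" unfolding l1norm_def by (simp add: sum_nonneg)
  have P1: "\<bar>sigma_hat U0 l (x + y) - sigma_hat U0 l x\<bar> \<le> 2 powr (real_of_int l) * l1norm y
          \<and> \<bar>sigma_tilde U0 l (x + y) - sigma_tilde U0 l x\<bar> \<le> 2 powr (real_of_int l - 2) * l1norm y"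
    for x y :: "real^'n" and l :: int
  proof
    define p where "p = 2 powr (real_of_int l)"
    have p: "p > 0" by (simp add: p_def)
    have pm: "2 powr (- real_of_int l) = 1 / p" by (simp add: p_def powr_minus_divide)
    have p2: "2 powr (real_of_int l - 2) = p / 4" by (simp add: p_def powr_diff)
    have "\<bar>sigma_hat U0 l (x + y) - sigma_hat U0 l x\<bar> \<le> l1norm y / (2 * 2 powr (- real_of_int l))"
      unfolding hat by (rule lip_dens[OF _ A]) simp
    also have "\<dots> = p * l1norm y / 2" using p by (simp add: pm)
    also have "\<dots> \<le> p * l1norm y" using p l1nn[of y] by simp
    finally show "\<bar>sigma_hat U0 l (x + y) - sigma_hat U0 l x\<bar> \<le> 2 powr (real_of_int l) * l1norm y"
      by (simp add: p_def)
    have "\<bar>sigma_tilde U0 l (x + y) - sigma_tilde U0 l x\<bar> \<le> l1norm y / (2 * (4 * 2 powr (- real_of_int l)))"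
      unfolding tilde by (rule lip_dens[OF _ A]) simp
    also have "\<dots> = p * l1norm y / 8" using p by (simp add: pm)
    also have "\<dots> \<le> p / 4 * l1norm y" using p l1nn[of y] by simp
    finally show "\<bar>sigma_tilde U0 l (x + y) - sigma_tilde U0 l x\<bar> \<le> 2 powr (real_of_int l - 2) * l1norm y"
      by (simp add: p2)
  qed
  have P2: "\<bar>sigma_hat U0 l x
              - (1 / measure lebesgue (supball x (2 powr (- real_of_int l))))
                * integral (supball x (2 powr (- real_of_int l))) (sigma_hat U0 l')\<bar>
            \<le> real CARD('n) * 2 ^ (CARD('n) - 1) * 2 powr (real_of_int (l - l'))"
    if ll: "l' > l" for l l' :: int and x :: "real^'n"
  proof -
    define d where "d = CARD('n)"
    define r where "r = 2 powr (- real_of_int l)"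
    define s where "s = 2 powr (- real_of_int l')"
    define t where "t = 2 powr (real_of_int (l - l'))"
    define C where "C = real d * 2 ^ (d - 1)"
    have r0: "r > 0" by (simp add: r_def)
    have t0: "t > 0" by (simp add: t_def)
    have srt: "s = r * t"
      unfolding s_def r_def t_def by (simp add: powr_add[symmetric])
    have "t \<le> 2 powr (-1)"
      unfolding t_def using ll by (intro powr_mono) auto
    then have t1: "t \<le> 1/2" by (simp add: powr_minus_divide)
    have s0: "0 < s" "s \<le> r" using srt r0 t0 t1 by (auto intro: mult_left_le)
    obtain R where R: "((\<lambda>y. measure lborel (supball y s \<inter> A) / measure lborel (supball y s)) has_integral R) (supball x r)"
      and Rl: "measure lborel (supball x (r - s) \<inter> A) \<le> R"
      and Rh: "R \<le> measure lborel (supball x (r + s) \<inter> A)"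
      using avg_integral[OF A s0, of x] by blast
    have "sigma_hat U0 l' = (\<lambda>y. measure lborel (supball y s \<inter> A) / measure lborel (supball y s))"
      by (simp add: fun_eq_iff hat s_def)
    then have int: "integral (supball x r) (sigma_hat U0 l') = R" using R by (simp add: integral_unique)
    define V where "V = (2 * r) ^ d"
    have V0: "V > 0" using r0 by (simp add: V_def)
    have Vr: "measure lborel (supball x r) = V" using r0 by (simp add: measure_supball V_def d_def)
    have Vleb: "measure lebesgue (supball x r) = V" using Vr by simp
    define m where "m = measure lborel (supball x r \<inter> A)"
    have Vm: "measure lborel (supball x (r - s)) = V * (1 - t) ^ d"
    proof -
      have "measure lborel (supball x (r - s)) = (2 * (r - s)) ^ d" using s0 by (simp add: measure_supball d_def)
      also have "2 * (r - s) = (2 * r) * (1 - t)" by (simp add: srt algebra_simps)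
      finally show ?thesis by (simp add: V_def power_mult_distrib)
    qed
    have Vp: "measure lborel (supball x (r + s)) = V * (1 + t) ^ d"
    proof -
      have "measure lborel (supball x (r + s)) = (2 * (r + s)) ^ d" using s0 by (simp add: measure_supball d_def)
      also have "2 * (r + s) = (2 * r) * (1 + t)" by (simp add: srt algebra_simps)
      finally show ?thesis by (simp add: V_def power_mult_distrib)
    qed
    have b1: "m - R \<le> V * (C * t)"
    proof -
      have "m - measure lborel (supball x (r - s) \<inter> A) \<le> V - V * (1 - t) ^ d"
        using meas_diff_le[OF A, of "r - s" r x] s0 Vr Vm unfolding m_def by simp
      also have "\<dots> = V * (1 - (1 - t) ^ d)" by (simp add: algebra_simps)
      also have "\<dots> \<le> V * (real d * t)" using V0 t0 t1 by (intro mult_left_mono bern1) auto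
      also have "\<dots> \<le> V * (C * t)"
      proof -
        have "(1::real) \<le> 2 ^ (d - 1)" by simp
        then have "real d * t \<le> C * t" unfolding C_def using t0
          by (intro mult_right_mono) (auto intro: mult_le_cancel_left1[THEN iffD2])
        then show ?thesis using V0 by simp
      qed
      finally show ?thesis using Rl by linarith
    qed
    have b2: "R - m \<le> V * (C * t)"
    proof -
      have "measure lborel (supball x (r + s) \<inter> A) - m \<le> V * (1 + t) ^ d - V"
        using meas_diff_le[OF A, of r "r + s" x] s0 Vr Vp unfolding m_def by simp
      also have "\<dots> = V * ((1 + t) ^ d - 1)" by (simp add: algebra_simps)
      also have "\<dots> \<le> V * (C * t)" unfolding C_def using V0 t0 t1
        by (intro mult_left_mono bern2) auto
      finally show ?thesis using Rh by linarith
    qed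
    have "\<bar>m / V - 1 / V * R\<bar> = \<bar>m - R\<bar> / V" using V0 by (simp add: field_simps)
    also have "\<dots> \<le> V * (C * t) / V" using b1 b2 V0 by (intro divide_right_mono) auto
    also have "\<dots> = C * t" using V0 by simp
    finally show ?thesis
      by (simp add: hat int Vleb Vr m_def C_def d_def t_def flip: r_def)
  qed
  show ?thesis using P1 P2 by blast
qed

end
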